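(* Let $\alpha$ be a graph function on a strongly connected digraph $G$ and $v$ a vertex with $\rho^R_v>0$. Then there exist edges $(u,v)$ and $(v,w)$ of $G$ such that $y_v+\frac{\rho^R_v}{2}\le\frac{y_u+y_w}{2}$.
   Context: $G$ is a strongly connected directed graph (self-loops allowed); a graph function assigns a real weight $\alpha_{uv}$ to each edge. $\alpha_v^{\text{in}}=\max_{u:(u,v)\in G}\alpha_{uv}$, $\alpha_v^{\text{out}}=\max_{w:(v,w)\in G}\alpha_{vw}$, $\rho^R_v=\max\{0,\alpha_v^{\text{out}}-\alpha_v^{\text{in}}\}$. A raising operation at $v$: if $\rho^R_v>0$ add $\rho^R_v/2$ to each incoming edge weight $\alpha_{uv}$ ($u\ne v$) and subtract it from each outgoing $\alpha_{vw}$ ($w\neq v$); otherwise do nothing. Starting from $\alpha$, for any infinite sequence of raising operations in which every vertex occurs infinitely often, the cumulative amount $r_v(t)$ by which each vertex has been raised converges to a limit vector $r^*$ independent of the sequence. The heights are $y_v=-r^*_v$. *)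

theory Defs
  imports Complex_Main
begin

text \<open>A digraph is given by a vertex set V and an edge set E \<subseteq> V \<times> V (self-loops allowed).
A graph function is a weight function on pairs; only values on E matter.\<close>

definition strongly_connected :: "'a set \<Rightarrow> ('a \<times> 'a) set \<Rightarrow> bool" where
  "strongly_connected V E \<longleftrightarrow> V \<noteq> {} \<and> (\<forall>u\<in>V. \<forall>v\<in>V. (u, v) \<in> E\<^sup>+)"

definition alpha_in :: "('a \<times> 'a) set \<Rightarrow> ('a \<times> 'a \<Rightarrow> real) \<Rightarrow> 'a \<Rightarrow> real" where
  "alpha_in E \<alpha> v = Max {\<alpha> (u, v) | u. (u, v) \<in> E}"

definition alpha_out :: "('a \<times> 'a) set \<Rightarrow> ('a \<times> 'a \<Rightarrow> real) \<Rightarrow> 'a \<Rightarrow> real" where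
  "alpha_out E \<alpha> v = Max {\<alpha> (v, w) | w. (v, w) \<in> E}"

definition rhoR :: "('a \<times> 'a) set \<Rightarrow> ('a \<times> 'a \<Rightarrow> real) \<Rightarrow> 'a \<Rightarrow> real" where
  "rhoR E \<alpha> v = max 0 (alpha_out E \<alpha> v - alpha_in E \<alpha> v)"

definition raise_op :: "('a \<times> 'a) set \<Rightarrow> ('a \<times> 'a \<Rightarrow> real) \<Rightarrow> 'a \<Rightarrow> ('a \<times> 'a \<Rightarrow> real)" where
  "raise_op E \<alpha> v =
     (if rhoR E \<alpha> v > 0 then
        (\<lambda>(a, b). \<alpha> (a, b)
            + (if b = v \<and> a \<noteq> v then rhoR E \<alpha> v / 2 else 0)
            - (if a = v \<and> b \<noteq> v then rhoR E \<alpha> v / 2 else 0))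
      else \<alpha>)"

primrec run :: "('a \<times> 'a) set \<Rightarrow> ('a \<times> 'a \<Rightarrow> real) \<Rightarrow> (nat \<Rightarrow> 'a) \<Rightarrow> nat \<Rightarrow> ('a \<times> 'a \<Rightarrow> real)" where
  "run E \<alpha> s 0 = \<alpha>"
| "run E \<alpha> s (Suc t) = raise_op E (run E \<alpha> s t) (s t)"

primrec raised :: "('a \<times> 'a) set \<Rightarrow> ('a \<times> 'a \<Rightarrow> real) \<Rightarrow> (nat \<Rightarrow> 'a) \<Rightarrow> nat \<Rightarrow> 'a \<Rightarrow> real" where
  "raised E \<alpha> s 0 = (\<lambda>v. 0)"
| "raised E \<alpha> s (Suc t) =
     (\<lambda>v. raised E \<alpha> s t v + (if v = s t then rhoR E (run E \<alpha> s t) v / 2 else 0))"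

definition fair_seq :: "'a set \<Rightarrow> (nat \<Rightarrow> 'a) \<Rightarrow> bool" where
  "fair_seq V s \<longleftrightarrow> (\<forall>t. s t \<in> V) \<and> (\<forall>v\<in>V. \<forall>n. \<exists>t\<ge>n. s t = v)"

end

theory Submission
  imports Defs
begin

lemma run_inv:
  "run E \<alpha> s t (a, b) = \<alpha> (a, b) + raised E \<alpha> s t b - raised E \<alpha> s t a"
proof (induction t arbitrary: a b)
  case 0
  then show ?case by simp
next
  case (Suc t)
  have r0: "rhoR E (run E \<alpha> s t) (s t) \<ge> 0" unfolding rhoR_def by simp
  show ?case
  proof (cases "rhoR E (run E \<alpha> s t) (s t) > 0")
    case True
    then show ?thesis using Suc.IH[of a b]
      by (auto simp: raise_op_def)
  next
    case False
    then have "rhoR E (run E \<alpha> s t) (s t) = 0" using r0 by linarith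
    then show ?thesis using Suc.IH[of a b] False
      by (auto simp: raise_op_def)
  qed
qed

theorem lemma4:
  fixes V :: "'a set" and E :: "('a \<times> 'a) set" and \<alpha> :: "'a \<times> 'a \<Rightarrow> real"
    and s :: "nat \<Rightarrow> 'a" and rstar :: "'a \<Rightarrow> real" and v :: 'a
  assumes "finite V" and "E \<subseteq> V \<times> V" and "strongly_connected V E"
    and "fair_seq V s"
    and "\<forall>x\<in>V. (\<lambda>t. raised E \<alpha> s t x) \<longlonglongrightarrow> rstar x"
    and "v \<in> V" and "rhoR E \<alpha> v > 0"
  shows "\<exists>u w. (u, v) \<in> E \<and> (v, w) \<in> E \<and>
           (- rstar v) + rhoR E \<alpha> v / 2 \<le> ((- rstar u) + (- rstar w)) / 2"
proof -
  have finE: "finite E" using assms(1,2) by (meson finite_SigmaI rev_finite_subset)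
  have vv: "(v, v) \<in> E\<^sup>+" using assms(3,6) unfolding strongly_connected_def by blast
  obtain c1 where c1: "(c1, v) \<in> E" using vv by (meson tranclE)
  obtain c2 where c2: "(v, c2) \<in> E" using vv by (meson converse_tranclE)
  have finIn: "finite {f (u, v) | u. (u, v) \<in> E}" for f :: "'a \<times> 'a \<Rightarrow> real"
  proof -
    have "{f (u, v) | u. (u, v) \<in> E} = f ` (E \<inter> {p. snd p = v})" by force
    then show ?thesis using finE by simp
  qed
  have finOut: "finite {f (v, w) | w. (v, w) \<in> E}" for f :: "'a \<times> 'a \<Rightarrow> real"
  proof -
    have "{f (v, w) | w. (v, w) \<in> E} = f ` (E \<inter> {p. fst p = v})" by force
    then show ?thesis using finE by simp
  qed
  have neIn: "{f (u, v) | u. (u, v) \<in> E} \<noteq> {}" for f :: "'a \<times> 'a \<Rightarrow> real"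
    using c1 by blast
  have neOut: "{f (v, w) | w. (v, w) \<in> E} \<noteq> {}" for f :: "'a \<times> 'a \<Rightarrow> real"
    using c2 by blast
  have in_ge: "(u, v) \<in> E \<Longrightarrow> f (u, v) \<le> alpha_in E f v" for f u
    unfolding alpha_in_def using finIn[of f] by (intro Max_ge) auto
  have out_ge: "(v, w) \<in> E \<Longrightarrow> f (v, w) \<le> alpha_out E f v" for f w
    unfolding alpha_out_def using finOut[of f] by (intro Max_ge) auto
  have in_att: "\<exists>u. (u, v) \<in> E \<and> alpha_in E f v = f (u, v)" for f
  proof -
    have "alpha_in E f v \<in> {f (u, v) | u. (u, v) \<in> E}"
      unfolding alpha_in_def using finIn[of f] neIn[of f] by (rule Max_in)
    then show ?thesis by auto
  qed
  have out_att: "\<exists>w. (v, w) \<in> E \<and> alpha_out E f v = f (v, w)" for f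
  proof -
    have "alpha_out E f v \<in> {f (v, w) | w. (v, w) \<in> E}"
      unfolding alpha_out_def using finOut[of f] neOut[of f] by (rule Max_in)
    then show ?thesis by auto
  qed
  define A where "A = (\<lambda>(a, b). \<alpha> (a, b) + rstar b - rstar a)"
  have conv: "(\<lambda>t. run E \<alpha> s t (a, b)) \<longlonglongrightarrow> A (a, b)" if "a \<in> V" "b \<in> V" for a b
    unfolding run_inv A_def using assms(5) that
    by (auto intro!: tendsto_intros)
  have C: "alpha_out E A v \<le> alpha_in E A v"
  proof (rule ccontr)
    assume nC: "\<not> alpha_out E A v \<le> alpha_in E A v"
    define \<delta> where "\<delta> = alpha_out E A v - alpha_in E A v"
    have dpos: "\<delta> > 0" using nC unfolding \<delta>_def by simp
    obtain w1 where w1: "(v, w1) \<in> E" "alpha_out E A v = A (v, w1)" using out_att by blast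
    have w1V: "w1 \<in> V" using w1 assms(2) by auto
    let ?U = "{u. (u, v) \<in> E}"
    have finU: "finite ?U"
    proof -
      have "?U = fst ` (E \<inter> {p. snd p = v})" by force
      then show ?thesis using finE by simp
    qed
    have ev1: "\<forall>u\<in>?U. eventually (\<lambda>t. run E \<alpha> s t (v, w1) - run E \<alpha> s t (u, v) > \<delta>/2) sequentially"
    proof
      fix u assume u: "u \<in> ?U"
      then have uV: "u \<in> V" using assms(2) by auto
      have "(\<lambda>t. run E \<alpha> s t (v, w1) - run E \<alpha> s t (u, v)) \<longlonglongrightarrow> A (v, w1) - A (u, v)"
        using conv[OF assms(6) w1V] conv[OF uV assms(6)] by (rule tendsto_diff)
      moreover have "A (v, w1) - A (u, v) > \<delta>/2"
        using in_ge[of u A] u w1(2) dpos unfolding \<delta>_def by auto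
      ultimately show "eventually (\<lambda>t. run E \<alpha> s t (v, w1) - run E \<alpha> s t (u, v) > \<delta>/2) sequentially"
        by (rule order_tendstoD(1))
    qed
    have ev2: "eventually (\<lambda>t. \<forall>u\<in>?U. run E \<alpha> s t (v, w1) - run E \<alpha> s t (u, v) > \<delta>/2) sequentially"
      using eventually_ball_finite[OF finU ev1] .
    have "(\<lambda>t. raised E \<alpha> s (Suc t) v - raised E \<alpha> s t v) \<longlonglongrightarrow> rstar v - rstar v"
    proof -
      have l: "(\<lambda>t. raised E \<alpha> s t v) \<longlonglongrightarrow> rstar v" using assms(5,6) by blast
      show ?thesis using tendsto_diff[OF LIMSEQ_Suc[OF l] l] .
    qed
    then have ev3: "eventually (\<lambda>t. raised E \<alpha> s (Suc t) v - raised E \<alpha> s t v < \<delta>/4) sequentially"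
      using dpos by (intro order_tendstoD(2)) auto
    obtain N where N: "\<And>t. t \<ge> N \<Longrightarrow> (\<forall>u\<in>?U. run E \<alpha> s t (v, w1) - run E \<alpha> s t (u, v) > \<delta>/2)
        \<and> raised E \<alpha> s (Suc t) v - raised E \<alpha> s t v < \<delta>/4"
      using eventually_conj[OF ev2 ev3] unfolding eventually_sequentially by blast
    obtain t where t: "t \<ge> N" "s t = v" using assms(4,6) unfolding fair_seq_def by blast
    obtain u' where u': "(u', v) \<in> E" "alpha_in E (run E \<alpha> s t) v = run E \<alpha> s t (u', v)"
      using in_att by blast
    have "rhoR E (run E \<alpha> s t) v \<ge> run E \<alpha> s t (v, w1) - run E \<alpha> s t (u', v)"
      unfolding rhoR_def using out_ge[OF w1(1), of "run E \<alpha> s t"] u'(2) by simp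
    moreover have "run E \<alpha> s t (v, w1) - run E \<alpha> s t (u', v) > \<delta>/2" using N[OF t(1)] u'(1) by blast
    moreover have "raised E \<alpha> s (Suc t) v - raised E \<alpha> s t v = rhoR E (run E \<alpha> s t) v / 2"
      using t(2) by simp
    ultimately show False using N[OF t(1)] by linarith
  qed
  obtain w0 where w0: "(v, w0) \<in> E" "alpha_out E \<alpha> v = \<alpha> (v, w0)" using out_att by blast
  obtain u1 where u1: "(u1, v) \<in> E" "alpha_in E A v = A (u1, v)" using in_att by blast
  have "A (v, w0) \<le> alpha_out E A v" using out_ge[OF w0(1)] .
  moreover have "\<alpha> (u1, v) \<le> alpha_in E \<alpha> v" using in_ge[OF u1(1)] .
  moreover have "rhoR E \<alpha> v = alpha_out E \<alpha> v - alpha_in E \<alpha> v"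
    using assms(7) unfolding rhoR_def by (simp add: max_def split: if_splits)
  ultimately have "(- rstar v) + rhoR E \<alpha> v / 2 \<le> ((- rstar u1) + (- rstar w0)) / 2"
    using C u1(2) w0(2) unfolding A_def by (simp add: field_simps)
  then show ?thesis using u1(1) w0(1) by blast
qed

end
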